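(* Let $\theta_1,\theta_2\in(0,\pi/2)$ satisfy $\theta_1\cot\theta_1=\pi\cot\theta_2$. Then $$\frac{2\theta_1}{\sin\theta_1}+2\cos\theta_1-\pi>\frac{2\pi}{\sin\theta_2}-2\pi.$$ *)

theory Defs
  imports Complex_Main
begin

end

theory Submission
  imports Defs "HOL-Analysis.Complex_Transcendental"
begin
lemma sin_up: fixes x::real assumes "0 \<le> x" shows "sin x \<le> x - x^3/6 + x^5/120 + x^7/5040"
proof -
  have "\<bar>sin x - (\<Sum>m<7. sin_coeff m * x ^ m)\<bar> \<le> inverse (fact 7) * \<bar>x\<bar> ^ 7" by (rule Maclaurin_sin_bound)
  moreover have "(\<Sum>m<7. sin_coeff m * x ^ m) = x - x^3/6 + x^5/120"
    by (simp add: lessThan_nat_numeral sin_coeff_def fact_numeral)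
  ultimately have "\<bar>sin x - (x - x^3/6 + x^5/120)\<bar> \<le> x^7/5040" using assms by (simp add: fact_numeral)
  then show ?thesis unfolding abs_le_iff by linarith
qed
lemma sin_lo: fixes x::real assumes "0 \<le> x" shows "sin x \<ge> x - x^3/6 - x^5/120"
proof -
  have "\<bar>sin x - (\<Sum>m<5. sin_coeff m * x ^ m)\<bar> \<le> inverse (fact 5) * \<bar>x\<bar> ^ 5" by (rule Maclaurin_sin_bound)
  moreover have "(\<Sum>m<5. sin_coeff m * x ^ m) = x - x^3/6"
    by (simp add: lessThan_nat_numeral sin_coeff_def fact_numeral)
  ultimately have "\<bar>sin x - (x - x^3/6)\<bar> \<le> x^5/120" using assms by (simp add: fact_numeral)
  then show ?thesis unfolding abs_le_iff by linarith
qed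
lemma cos_b: fixes x::real shows "\<bar>cos x - (1 - x^2/2 + x^4/24)\<bar> \<le> x^6/720"
proof -
  obtain t where "cos x = (\<Sum>m<6. cos_coeff m * x ^ m) + (cos(t + 1/2 * real 6 * pi) / fact 6) * x ^ 6"
    using Maclaurin_cos_expansion by blast
  moreover have "(\<Sum>m<6. cos_coeff m * x ^ m) = 1 - x^2/2 + x^4/24"
    by (simp add: lessThan_nat_numeral cos_coeff_def fact_numeral)
  moreover have "\<bar>cos(t + 1/2 * real 6 * pi) / fact 6 * x^6\<bar> \<le> x^6/720"
  proof -
    have "\<bar>cos(t + 1/2 * real 6 * pi)\<bar> * x^6 \<le> 1 * x^6"
      by (rule mult_right_mono) (auto simp: abs_cos_le_one)
    then show ?thesis by (simp add: fact_numeral abs_mult)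
  qed
  ultimately show ?thesis by simp
qed
lemma polyA: fixes p x :: real assumes "0 < x" "x \<le> 1" "157/50 \<le> p" "p \<le> 3927/1250"
  shows "(1 - x/3)^2 < p * (4 - 2*x/3 - p)"
proof -
  have a: "p*p \<le> (3927/1250)*(3927/1250)" using assms by (intro mult_mono) auto
  have b: "p*x \<le> (3927/1250)*x" using assms by (intro mult_right_mono) auto
  have c: "x*x \<le> 1*x" using assms by (intro mult_right_mono) auto
  have "p * (4 - 2*x/3 - p) - (1-x/3)^2 = 4*p - 2/3*(p*x) - p*p - 1 + 2/3*x - (x*x)/9"
    by (simp add: algebra_simps power2_eq_square)
  with a b c assms show ?thesis by linarith
qed

lemma lin_aux: fixes E P A B C D F :: real
  shows "E \<le> 32605/100000 \<Longrightarrow> 98596/10000 \<le> P \<Longrightarrow> A \<le> 17939/10000 \<Longrightarrow> B \<le> 3218/1000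
   \<Longrightarrow> C \<le> 5849/10000 \<Longrightarrow> 0 \<le> D \<Longrightarrow> 0 \<le> F \<Longrightarrow> 0 < P/4 - A/3 - 7/24*B - E - 4/15*C + (1/48-1/720)*D + F/1440"
  by (simp add: field_simps)

lemma polyB: fixes p e :: real assumes "0 < e" "e \<le> 571/1000" "157/50 \<le> p" "p \<le> 3927/1250"
  shows "0 < p^2/4 - p*e/3 - (7*p^2/24+1)*e^2 - 4*p*e^3/15 + p^2*(1/48-1/720)*e^4 + p^2*e^6/1440"
proof -
  have e2: "e^2 \<le> (571/1000)^2" using assms by (intro power_mono) auto
  have e3: "e^3 \<le> (571/1000)^3" using assms by (intro power_mono) auto
  have p2: "(157/50)^2 \<le> p^2" using assms by (intro power_mono) auto
  have p2u: "p^2 \<le> (3927/1250)^2" using assms by (intro power_mono) auto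
  have f1: "p*e \<le> (3927/1250)*(571/1000)" using assms by (intro mult_mono) auto
  have f2: "p^2*e^2 \<le> (3927/1250)^2*(571/1000)^2" using assms e2 p2u by (intro mult_mono) auto
  have f3: "p*e^3 \<le> (3927/1250)*(571/1000)^3" using assms e3 by (intro mult_mono) auto
  have f4: "0 \<le> p^2*e^4" "0 \<le> p^2*e^6" by auto
  have g1: "e^2 \<le> 32605/100000" using e2 by (simp add: power2_eq_square)
  have g2: "98596/10000 \<le> p^2" using p2 by (simp add: power_divide)
  have g3: "p*e \<le> 17939/10000" using f1 by (simp add: power_divide)
  have g4: "p^2*e^2 \<le> 3218/1000" using f2 by (simp add: power_divide)
  have g5: "p*e^3 \<le> 5849/10000" using f3 by (simp add: power_divide)
  have eq: "p^2/4 - p*e/3 - (7*p^2/24+1)*e^2 - 4*p*e^3/15 + p^2*(1/48-1/720)*e^4 + p^2*e^6/1440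
     = p^2/4 - (p*e)/3 - 7/24*(p^2*e^2) - e^2 - 4/15*(p*e^3) + (1/48-1/720)*(p^2*e^4) + (p^2*e^6)/1440"
    by (simp add: algebra_simps)
  have "0 < p^2/4 - (p*e)/3 - 7/24*(p^2*e^2) - e^2 - 4/15*(p*e^3) + (1/48-1/720)*(p^2*e^4) + (p^2*e^6)/1440"
    using g1 g2 g3 g4 g5 f4 lin_aux by blast
  then show ?thesis by (simp only: eq)
qed

lemma pi_bnds: "157/50 \<le> pi" "pi \<le> 3927/1250"
  using pi_approx by auto

lemma regionA: fixes t :: real assumes t0: "0 < t" and t1: "t \<le> 1"
  shows "t^2 * cos t ^2 / (pi * sin t ^ 2) < 2*t/sin t + 2*cos t - pi"
proof -
  define s where "s = sin t"
  define c where "c = cos t"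
  have pi3: "3 < pi" using pi_bnds by linarith
  have s0: "0 < s" unfolding s_def using t0 t1 pi3 by (intro sin_gt_zero) auto
  have c0: "0 < c" unfolding c_def using t0 t1 pi3 by (intro cos_gt_zero_pi) auto
  have su: "s \<le> t - t^3/6 + t^5/120 + t^7/5040" unfolding s_def using sin_up t0 by auto
  have sl: "s \<ge> t - t^3/6 - t^5/120" unfolding s_def using sin_lo t0 by auto
  have cb: "\<bar>c - (1 - t^2/2 + t^4/24)\<bar> \<le> t^6/720" unfolding c_def by (rule cos_b)
  have t75: "t^7 \<le> t^5" using t0 t1 by (intro power_decreasing) auto
  have t95: "t^9 \<le> t^5" using t0 t1 by (intro power_decreasing) auto
  have t64: "t^6 \<le> t^4" using t0 t1 by (intro power_decreasing) auto
  have t5: "0 \<le> t^5" using t0 by simp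
  have t2: "t^2 \<le> 1" using t0 t1 by (simp add: power_le_one)
  have "s*(1+t^2/6) \<le> (t - t^3/6 + t^5/120 + t^7/5040)*(1+t^2/6)"
    using su by (intro mult_right_mono) auto
  also have "\<dots> = t - 7/360*t^5 + t^7/630 + t^9/30240"
    by (simp add: field_simps eval_nat_numeral)
  also have "\<dots> \<le> t" using t75 t95 t0 t5 by linarith
  finally have A1: "s*(1+t^2/6) \<le> t" .
  define r where "r = t/s"
  have r1: "1 + t^2/6 \<le> r" unfolding r_def using A1 s0 by (simp add: pos_le_divide_eq mult.commute)
  have A2: "1 - t^2/2 \<le> c" using cb t64 unfolding abs_le_iff by linarith
  have "t*c \<le> t*(1 - t^2/2 + t^4/24 + t^6/720)" using cb t0 unfolding abs_le_iff
    by (intro mult_left_mono) auto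
  also have "\<dots> \<le> (t - t^3/6 - t^5/120)*(1 - t^2/3)"
  proof -
    have "(t - t^3/6 - t^5/120)*(1 - t^2/3) - t*(1 - t^2/2 + t^4/24 + t^6/720) = t^5/180 + t^7/720"
      by (simp add: field_simps eval_nat_numeral)
    moreover have "0 \<le> t^5/180 + t^7/720" using t0 by simp
    ultimately show ?thesis by linarith
  qed
  also have "\<dots> \<le> s*(1 - t^2/3)" using sl t2 by (intro mult_right_mono) auto
  finally have A3: "t*c \<le> s*(1 - t^2/3)" .
  define y where "y = t*c/s"
  have y0: "0 \<le> y" unfolding y_def using t0 c0 s0 by simp
  have y1: "y \<le> 1 - t^2/3" unfolding y_def using A3 s0 by (simp add: pos_divide_le_eq mult.commute)
  have y2: "y^2 \<le> (1 - t^2/3)^2" using y0 y1 by (intro power_mono) auto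
  have eqL: "t^2 * cos t ^2 / (pi * sin t ^ 2) = y^2/pi"
    unfolding y_def s_def c_def by (simp add: power_divide power_mult_distrib)
  have eqR: "2*t/sin t + 2*cos t - pi = 2*r + 2*c - pi" unfolding r_def s_def c_def by simp
  have "y^2/pi \<le> (1 - t^2/3)^2/pi" using y2 pi3 by (intro divide_right_mono) auto
  also have "\<dots> < 4 - 2*t^2/3 - pi"
    using polyA[of "t^2" pi] t0 t2 pi_bnds pi3 by (simp add: pos_divide_less_eq mult.commute)
  also have "\<dots> \<le> 2*r + 2*c - pi" using r1 A2 by linarith
  finally show ?thesis using eqL eqR by simp
qed

lemma regionB: fixes t :: real assumes t1: "1 \<le> t" and t2: "t < pi/2"
  shows "t^2 * cos t ^2 / (pi * sin t ^ 2) < 2*t/sin t + 2*cos t - pi"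
proof -
  define e where "e = pi/2 - t"
  define C where "C = cos e"
  define S where "S = sin e"
  have pi3: "3 < pi" using pi_bnds by linarith
  have e0: "0 < e" unfolding e_def using t2 by simp
  have e1: "e \<le> 571/1000" unfolding e_def using t1 pi_bnds by linarith
  have tE: "t = pi/2 - e" unfolding e_def by simp
  have sinC: "sin t = C" unfolding C_def e_def by (simp add: cos_sin_eq)
  have cosS: "cos t = S" unfolding S_def e_def by (simp add: sin_cos_eq)
  have C0: "0 < C" unfolding C_def using e0 e1 pi3 by (intro cos_gt_zero_pi) auto
  have C1: "C \<le> 1" unfolding C_def by simp
  have S0: "0 \<le> S" unfolding S_def using e0 e1 pi3 by (intro sin_ge_zero) auto
  have Se: "S \<le> e" unfolding S_def using e0 by (intro sin_x_le_x) auto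
  have cb: "\<bar>C - (1 - e^2/2 + e^4/24)\<bar> \<le> e^6/720" unfolding C_def by (rule cos_b)
  have e64: "e^6 \<le> e^4" using e0 e1 by (intro power_decreasing) auto
  have e42: "e^4 \<le> e^2" using e0 e1 by (intro power_decreasing) auto
  have e2: "e^2 \<le> 1" using e0 e1 by (simp add: power_le_one)
  define D where "D = e^2/2 - e^4/24 - e^6/720"
  define B where "B = 4*e^3/3 + 4*e^5/15"
  have Cl: "1 - e^2/2 \<le> C" using cb e64 unfolding abs_le_iff by linarith
  have D1: "D \<le> 1 - C" using cb unfolding abs_le_iff D_def by linarith
  have D0: "0 \<le> D" unfolding D_def using e64 e42 e2 zero_le_power2[of e] by linarith
  have s2e: "sin (2*e) \<ge> 2*e - (2*e)^3/6 - (2*e)^5/120" using sin_lo[of "2*e"] e0 by simp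
  have sB: "2*e - 2*S*C \<le> B"
  proof -
    have "sin (2*e) = 2*S*C" unfolding S_def C_def by (rule sin_double)
    moreover have "(2*e)^3/6 + (2*e)^5/120 = B" unfolding B_def by (simp add: field_simps eval_nat_numeral)
    ultimately show ?thesis using s2e by linarith
  qed
  have B0: "0 \<le> B" unfolding B_def using e0 by simp
  have T1: "(1 - e^2/2) * D \<le> C * (1 - C)" using Cl D1 D0 e2 by (intro mult_mono) auto
  have T2: "C * (2*e - 2*S*C) \<le> B"
  proof -
    have "C * (2*e - 2*S*C) \<le> C * B" using sB C0 by (intro mult_left_mono) auto
    also have "\<dots> \<le> 1 * B" using C1 B0 by (intro mult_right_mono) auto
    finally show ?thesis by simp
  qed
  have T3: "t^2 * S^2 \<le> t^2 * e^2" using S0 Se by (intro mult_left_mono power_mono) auto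
  define H where "H = pi^2/4 - pi*e/3 - (7*pi^2/24+1)*e^2 - 4*pi*e^3/15 + pi^2*(1/48-1/720)*e^4 + pi^2*e^6/1440"
  have H0: "0 < H" unfolding H_def using polyB[of e pi] e0 e1 pi_bnds by auto
  have G_eq: "pi * (2*t*C + 2*S*C^2 - pi*C^2) - t^2*S^2 = pi^2 * (C*(1-C)) - pi * (C*(2*e - 2*S*C)) - t^2*S^2"
    unfolding tE by (simp add: algebra_simps power2_eq_square)
  have L_eq: "pi^2 * ((1 - e^2/2) * D) - pi * B - t^2*e^2 = e^2 * H"
    unfolding tE D_def B_def H_def by (simp add: field_simps eval_nat_numeral)
  have "pi^2 * ((1 - e^2/2) * D) \<le> pi^2 * (C*(1-C))" using T1 by (intro mult_left_mono) auto
  moreover have "pi * (C*(2*e - 2*S*C)) \<le> pi * B" using T2 pi3 by (intro mult_left_mono) auto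
  moreover have "0 < e^2 * H" using e0 H0 by simp
  ultimately have G0: "t^2*S^2 < pi * (2*t*C + 2*S*C^2 - pi*C^2)" using G_eq L_eq T3 by linarith
  have R_eq: "(2*t/C + 2*S - pi) * (pi * C^2) = pi * (2*t*C + 2*S*C^2 - pi*C^2)"
    using C0 by (simp add: field_simps power2_eq_square)
  have "t^2 * S^2 / (pi * C^2) < 2*t/C + 2*S - pi"
  proof -
    have "t^2*S^2 < (2*t/C + 2*S - pi) * (pi * C^2)" using G0 R_eq by linarith
    moreover have "0 < pi * C^2" using C0 pi3 by simp
    ultimately show ?thesis by (simp add: pos_divide_less_eq)
  qed
  then show ?thesis using sinC cosS by simp
qed

theorem lemma4p2:
  fixes \<theta>1 \<theta>2 :: real
  assumes "0 < \<theta>1" "\<theta>1 < pi / 2"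
    and "0 < \<theta>2" "\<theta>2 < pi / 2"
    and "\<theta>1 * cot \<theta>1 = pi * cot \<theta>2"
  shows "2 * \<theta>1 / sin \<theta>1 + 2 * cos \<theta>1 - pi > 2 * pi / sin \<theta>2 - 2 * pi"
proof -
  define t where "t = \<theta>1"
  have pi3: "3 < pi" using pi_bnds by linarith
  have key: "t^2 * cos t ^2 / (pi * sin t ^ 2) < 2*t/sin t + 2*cos t - pi"
  proof (cases "t \<le> 1")
    case True then show ?thesis using regionA assms(1) unfolding t_def by blast
  next
    case False then show ?thesis using regionB assms(2) unfolding t_def by auto
  qed
  define sp where "sp = sin \<theta>2"
  define cp where "cp = cos \<theta>2"
  have sp0: "0 < sp" unfolding sp_def using assms(3,4) pi3 by (intro sin_gt_zero) auto
  have s0: "0 < sin t" unfolding t_def using assms(1,2) pi3 by (intro sin_gt_zero) auto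
  have cp2: "cp^2 = 1 - sp^2" unfolding cp_def sp_def by (simp add: cos_squared_eq)
  have k: "cp/sp = t * cos t / (pi * sin t)"
  proof -
    have h: "t * (cos t / sin t) = pi * (cp/sp)" using assms(5) unfolding cot_def t_def cp_def sp_def .
    have "cp/sp = (pi*(cp/sp))/pi" using pi3 by simp
    also have "\<dots> = t * (cos t / sin t) / pi" by (simp only: h)
    finally show ?thesis by simp
  qed
  have "2 * pi / sp - 2 * pi \<le> pi * (cp/sp)^2"
  proof -
    have e1: "pi * (cp/sp)^2 = pi * (1 - sp^2) / sp^2" by (simp add: power_divide cp2)
    have "pi * (1 - sp^2) / sp^2 - (2 * pi / sp - 2 * pi) = pi * (1 - sp)^2 / sp^2"
      using sp0 by (simp add: field_simps power2_eq_square)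
    with e1 have "pi * (cp/sp)^2 - (2 * pi / sp - 2 * pi) = pi * (1 - sp)^2 / sp^2" by simp
    moreover have "0 \<le> pi * (1 - sp)^2 / sp^2" using pi3 by simp
    ultimately show ?thesis by linarith
  qed
  also have "pi * (cp/sp)^2 = t^2 * cos t ^2 / (pi * sin t ^ 2)"
    unfolding k using pi3 s0 by (simp add: power_divide power_mult_distrib power2_eq_square mult_ac)
  finally show ?thesis using key unfolding sp_def t_def by linarith
qed
end
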